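(* Let $G$ be a group generated by a set $X$, let $p_1,\dots,p_k$ be palindromes in $G$ and $u\in G$. Then: (1) if $q=p_1p_2$, then for every integer $m$ the element $q^m$ is a product of two palindromes; (2) $l_{\mathcal P}([u,p_1p_2\cdots p_k])\le 2k+\varepsilon$, where $\varepsilon=0$ if $k$ is even and $\varepsilon=1$ if $k$ is odd.
   Context: A palindrome in $G=\langle X\rangle$ is an element represented by a reduced word in $X^{\pm1}$ reading the same forwards and backwards; $l_{\mathcal P}(g)$ is the minimal number of palindromes whose product is $g$. The commutator is $[g,h]=g^{-1}h^{-1}gh$. *)

theory Defs
  imports "HOL-Algebra.Algebra"
begin

text \<open>Words over S^{\<pm>1}: a letter is (True, x) for x and (False, x) for x^{-1}.\<close>

definition letter_val :: "('g, 'b) monoid_scheme \<Rightarrow> bool \<times> 'g \<Rightarrow> 'g" where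
  "letter_val G l = (if fst l then snd l else inv\<^bsub>G\<^esub> (snd l))"

definition word_val :: "('g, 'b) monoid_scheme \<Rightarrow> (bool \<times> 'g) list \<Rightarrow> 'g" where
  "word_val G w = foldr (\<lambda>l acc. letter_val G l \<otimes>\<^bsub>G\<^esub> acc) w \<one>\<^bsub>G\<^esub>"

fun reduced_word :: "(bool \<times> 'g) list \<Rightarrow> bool" where
  "reduced_word (a # b # w) = (\<not> (snd a = snd b \<and> fst a \<noteq> fst b) \<and> reduced_word (b # w))"
| "reduced_word _ = True"

definition palindromes :: "('g, 'b) monoid_scheme \<Rightarrow> 'g set \<Rightarrow> 'g set" where
  "palindromes G S = {g. \<exists>w. set (map snd w) \<subseteq> S \<and> reduced_word w \<and> rev w = w \<and> word_val G w = g}"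

definition list_prod :: "('g, 'b) monoid_scheme \<Rightarrow> 'g list \<Rightarrow> 'g" where
  "list_prod G ps = foldr (\<lambda>p acc. p \<otimes>\<^bsub>G\<^esub> acc) ps \<one>\<^bsub>G\<^esub>"

definition pal_length :: "('g, 'b) monoid_scheme \<Rightarrow> 'g set \<Rightarrow> 'g \<Rightarrow> nat" where
  "pal_length G S g = (LEAST n. \<exists>ps. length ps = n \<and> set ps \<subseteq> palindromes G S \<and> list_prod G ps = g)"

definition commutator :: "('g, 'b) monoid_scheme \<Rightarrow> 'g \<Rightarrow> 'g \<Rightarrow> 'g" where
  "commutator G g h = inv\<^bsub>G\<^esub> g \<otimes>\<^bsub>G\<^esub> inv\<^bsub>G\<^esub> h \<otimes>\<^bsub>G\<^esub> g \<otimes>\<^bsub>G\<^esub> h"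

end

theory Submission imports Defs begin

definition flipl :: "bool \<times> 'g \<Rightarrow> bool \<times> 'g" where "flipl l = (\<not> fst l, snd l)"
definition canc :: "bool \<times> 'g \<Rightarrow> bool \<times> 'g \<Rightarrow> bool" where
  "canc a b \<longleftrightarrow> snd a = snd b \<and> fst a \<noteq> fst b"

lemma pc1: "t \<noteq> [] \<Longrightarrow> \<exists>v b. t = v @ [b]" by (metis append_butlast_last_id)
lemma pc2: "\<not> length w \<le> 1 \<Longrightarrow> \<exists>a t. w = a # t \<and> t \<noteq> []" by (cases w) auto
lemma pc3: "length (w::'a list) \<le> 1 \<Longrightarrow> w = [] \<or> (\<exists>a. w = [a])" by (cases w) auto
lemma pc4: "rev (a # v @ [b]) = a # v @ [b] \<Longrightarrow> a = b \<and> rev v = v"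
proof -
  assume h: "rev (a # v @ [b]) = a # v @ [b]"
  have e1: "rev (a # v @ [b]) = b # (rev v @ [a])" by simp
  have e: "b # (rev v @ [a]) = a # (v @ [b])" by (rule trans[OF sym[OF e1] h])
  have f: "b = a \<and> rev v @ [a] = v @ [b]" by (rule iffD1[OF list.inject e])
  have g: "rev v = v \<and> a = b" by (rule iffD1[OF append1_eq_conv conjunct2[OF f]])
  show ?thesis by (rule conjI[OF conjunct2[OF g] conjunct1[OF g]])
qed
lemma pal_cases: assumes r: "rev w = w"
  shows "w = [] \<or> (\<exists>a. w = [a]) \<or> (\<exists>a v. w = a # v @ [a] \<and> rev v = v)"
proof (cases "length w \<le> 1")
  case True
  then show ?thesis using pc3 by blast
next
  case False
  obtain a t where wt: "w = a # t" and tn: "t \<noteq> []" using pc2[OF False] by blast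
  obtain v b where t: "t = v @ [b]" using pc1[OF tn] by blast
  have w: "w = a # v @ [b]" using wt t by simp
  have "rev (a # v @ [b]) = a # v @ [b]" using subst[OF w, where P="\<lambda>x. rev x = x", OF r] .
  then have abv: "a = b \<and> rev v = v" by (rule pc4)
  then have ab: "a = b" and rv: "rev v = v" by (rule conjunct1, rule conjunct2)
  show ?thesis using ab rv w by blast
qed

lemma red_cons: "reduced_word v \<Longrightarrow> (v = [] \<or> \<not> canc a (hd v)) \<Longrightarrow> reduced_word (a # v)"
  by (cases v) (auto simp: canc_def)

lemma red_snoc: "reduced_word v \<Longrightarrow> (v = [] \<or> \<not> canc (last v) a) \<Longrightarrow> reduced_word (v @ [a])"
proof (induction v rule: reduced_word.induct)
  case (1 x y w)
  then show ?case by (cases w) auto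
next
  case ("2_2" v) then show ?case by (auto simp: canc_def)
qed auto

lemma red_append: "reduced_word (x @ y) \<Longrightarrow> reduced_word x \<and> reduced_word y"
proof (induction x rule: reduced_word.induct)
  case (1 a b w) then show ?case by auto
next
  case ("2_2" v) then show ?case by (cases y) auto
qed auto

context group begin

lemma letter_closed: "snd l \<in> carrier G \<Longrightarrow> letter_val G l \<in> carrier G"
  by (simp add: letter_val_def)

lemma word_closed: "set (map snd w) \<subseteq> carrier G \<Longrightarrow> word_val G w \<in> carrier G"
  by (induction w) (auto simp: word_val_def letter_closed)

lemma word_nil[simp]: "word_val G [] = \<one>"
  by (simp add: word_val_def)

lemma word_cons: "word_val G (a # w) = letter_val G a \<otimes> word_val G w"
  by (simp add: word_val_def)

lemma word_append: "set (map snd x) \<subseteq> carrier G \<Longrightarrow> set (map snd y) \<subseteq> carrier G \<Longrightarrow>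
   word_val G (x @ y) = word_val G x \<otimes> word_val G y"
  by (induction x) (auto simp: word_val_def m_assoc letter_closed word_closed[unfolded word_val_def])

lemma word_single: "snd a \<in> carrier G \<Longrightarrow> word_val G [a] = letter_val G a"
  by (simp add: word_val_def letter_closed)

lemma canc_one: "canc a b \<Longrightarrow> snd a \<in> carrier G \<Longrightarrow> letter_val G a \<otimes> letter_val G b = \<one>"
  by (auto simp: canc_def letter_val_def)

lemma word_inv: "set (map snd w) \<subseteq> carrier G \<Longrightarrow> word_val G (map flipl (rev w)) = inv (word_val G w)"
proof (induction w)
  case Nil then show ?case by (simp add: word_val_def)
next
  case (Cons a w)
  have c: "snd a \<in> carrier G" "set (map snd w) \<subseteq> carrier G" using Cons.prems by auto
  have fl: "letter_val G (flipl a) = inv (letter_val G a)"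
    using c by (auto simp: flipl_def letter_val_def)
  have "word_val G (map flipl (rev (a # w))) = word_val G (map flipl (rev w)) \<otimes> word_val G [flipl a]"
    using c by (simp add: word_append flipl_def comp_def)
  also have "\<dots> = inv (word_val G w) \<otimes> inv (letter_val G a)"
  proof -
    have sf: "snd (flipl a) \<in> carrier G" using c by (simp add: flipl_def)
    show ?thesis using Cons.IH[OF c(2)] word_single[OF sf] fl by simp
  qed
  also have "\<dots> = inv (word_val G (a # w))"
    using c by (simp add: word_cons inv_mult_group letter_closed word_closed)
  finally show ?case .
qed


lemma invcan1: "x \<in> carrier G \<Longrightarrow> y \<in> carrier G \<Longrightarrow> inv x \<otimes> (x \<otimes> y) = y"
  by (simp add: m_assoc[symmetric])
lemma invcan2: "x \<in> carrier G \<Longrightarrow> y \<in> carrier G \<Longrightarrow> x \<otimes> (inv x \<otimes> y) = y"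
  by (simp add: m_assoc[symmetric])

lemma canc_sym: "canc a b \<longleftrightarrow> canc b a" by (auto simp: canc_def)

lemma pal_word:
  assumes "S \<subseteq> carrier G"
  shows "rev w = w \<Longrightarrow> set (map snd w) \<subseteq> S \<Longrightarrow>
    \<exists>w'. set (map snd w') \<subseteq> S \<and> reduced_word w' \<and> rev w' = w' \<and> word_val G w' = word_val G w"
proof (induction "length w" arbitrary: w rule: less_induct)
  case less
  from pal_cases[OF less.prems(1)] consider "w = []" | a where "w=[a]"
    | a v where "w = a # v @ [a]" "rev v = v" by blast
  then show ?case
  proof cases
    case 1 then show ?thesis by (intro exI[of _ "[]"]) auto
  next
    case (2 a) then show ?thesis using less.prems by (intro exI[of _ "[a]"]) auto
  next
    case (3 a v)
    have sa: "snd a \<in> S" and sv: "set (map snd v) \<subseteq> S" using less.prems 3 by auto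
    obtain v' where v': "set (map snd v') \<subseteq> S" "reduced_word v'" "rev v' = v'" "word_val G v' = word_val G v"
      using less.hyps[of v] 3 sv by auto
    have cS: "snd a \<in> carrier G" "set (map snd v') \<subseteq> carrier G" "set (map snd v) \<subseteq> carrier G"
      using sa v' sv assms by auto
    have wv: "word_val G w = letter_val G a \<otimes> word_val G v' \<otimes> letter_val G a"
      using cS 3 v'(4) by (simp add: word_append word_cons word_single m_assoc letter_closed word_closed)
    from pal_cases[OF v'(3)] consider "v' = []" | b where "v' = [b]"
      | b v'' where "v' = b # v'' @ [b]" "rev v'' = v''" by blast
    then show ?thesis
    proof cases
      case 1
      show ?thesis using wv 1 sa cS
        by (intro exI[of _ "[a,a]"]) (auto simp: word_cons word_val_def letter_closed)
    next
      case (2 b)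
      have sb: "snd b \<in> carrier G" using cS 2 by auto
      show ?thesis
      proof (cases "canc a b")
        case True
        have "word_val G w = letter_val G a"
          using wv 2 canc_one[OF True cS(1)] sb cS by (simp add: word_single letter_closed)
        then show ?thesis using sa cS by (intro exI[of _ "[a]"]) (auto simp: word_single)
      next
        case False
        then have "\<not> canc b a" using canc_sym by blast
        then show ?thesis using False wv 2 sa cS sb v'(1)
          by (intro exI[of _ "[a,b,a]"]) (auto simp: word_val_def m_assoc letter_closed canc_def)
      qed
    next
      case (3 b v'')
      have sb: "snd b \<in> carrier G" "snd b \<in> S" using cS v' 3 by auto
      have sv'': "set (map snd v'') \<subseteq> carrier G" "set (map snd v'') \<subseteq> S" using cS v' 3 by auto
      have lb: "letter_val G b \<in> carrier G" and la: "letter_val G a \<in> carrier G"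
        and lv: "word_val G v'' \<in> carrier G"
        using sb cS sv'' by (auto simp: letter_closed word_closed)
      have vv: "word_val G v' = letter_val G b \<otimes> word_val G v'' \<otimes> letter_val G b"
        using 3 sb sv'' by (simp add: word_append word_cons word_single m_assoc letter_closed word_closed)
      show ?thesis
      proof (cases "canc a b")
        case True
        have ab: "letter_val G a \<otimes> letter_val G b = \<one>" using canc_one[OF True cS(1)] .
        have ba: "letter_val G b \<otimes> letter_val G a = \<one>"
          using canc_one[of b a] True canc_sym sb by blast
        have "word_val G w = (letter_val G a \<otimes> letter_val G b) \<otimes> word_val G v'' \<otimes> (letter_val G b \<otimes> letter_val G a)"
          using wv vv la lb lv by (simp add: m_assoc)
        then have e: "word_val G w = word_val G v''" using ab ba lv by simp
        have "reduced_word v''" using v'(2) 3 red_append[of "[b]" "v'' @ [b]"] red_append[of v'' "[b]"] by auto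
        then show ?thesis using e 3 sv'' by (intro exI[of _ v'']) auto
      next
        case False
        then have nb: "\<not> canc b a" using canc_sym by blast
        have r: "reduced_word (a # v' @ [a])"
          apply (rule red_cons)
           apply (rule red_snoc[OF v'(2)])
          using 3 nb False by auto
        have "word_val G (a # v' @ [a]) = word_val G w"
          using wv cS by (simp add: word_append word_cons word_single m_assoc letter_closed word_closed)
        then show ?thesis using r v' sa by (intro exI[of _ "a # v' @ [a]"]) auto
      qed
    qed
  qed
qed

lemma pal_in: "S \<subseteq> carrier G \<Longrightarrow> rev w = w \<Longrightarrow> set (map snd w) \<subseteq> S \<Longrightarrow> word_val G w \<in> palindromes G S"
  using pal_word[of S w] unfolding palindromes_def by force

lemma pal_obtain: "p \<in> palindromes G S \<Longrightarrow> \<exists>w. set (map snd w) \<subseteq> S \<and> rev w = w \<and> word_val G w = p"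
  unfolding palindromes_def by blast

lemma pal_carrier: "S \<subseteq> carrier G \<Longrightarrow> p \<in> palindromes G S \<Longrightarrow> p \<in> carrier G"
  using pal_obtain word_closed by (metis subset_trans)

lemma one_pal: "S \<subseteq> carrier G \<Longrightarrow> \<one> \<in> palindromes G S"
  using pal_in[of S "[]"] by (simp add: word_val_def)

lemma inv_pal: assumes "S \<subseteq> carrier G" "p \<in> palindromes G S" shows "inv p \<in> palindromes G S"
proof -
  obtain w where w: "set (map snd w) \<subseteq> S" "rev w = w" "word_val G w = p" using pal_obtain[OF assms(2)] by blast
  have "word_val G (map flipl w) = inv p" using word_inv[of w] w assms(1) by auto
  moreover have "word_val G (map flipl w) \<in> palindromes G S"
    by (rule pal_in) (use w assms(1) in \<open>auto simp: rev_map flipl_def\<close>)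
  ultimately show ?thesis by simp
qed

lemma sand_pal: assumes "S \<subseteq> carrier G" "p \<in> palindromes G S" "r \<in> palindromes G S"
  shows "p \<otimes> r \<otimes> p \<in> palindromes G S"
proof -
  obtain w where w: "set (map snd w) \<subseteq> S" "rev w = w" "word_val G w = p" using pal_obtain[OF assms(2)] by blast
  obtain v where v: "set (map snd v) \<subseteq> S" "rev v = v" "word_val G v = r" using pal_obtain[OF assms(3)] by blast
  have "word_val G (w @ v @ w) \<in> palindromes G S"
    by (rule pal_in) (use w v assms(1) in auto)
  moreover have "word_val G (w @ v @ w) = p \<otimes> r \<otimes> p"
  proof -
    have c: "set (map snd w) \<subseteq> carrier G" "set (map snd v) \<subseteq> carrier G" using w v assms by auto
    have "word_val G (w @ v @ w) = word_val G w \<otimes> word_val G v \<otimes> word_val G w"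
      using c by (simp add: word_append m_assoc word_closed)
    then show ?thesis using w v by simp
  qed
  ultimately show ?thesis by simp
qed

lemma conj1: assumes "S \<subseteq> carrier G" "p \<in> palindromes G S" "set (map snd x) \<subseteq> S"
  shows "word_val G (rev x) \<otimes> p \<otimes> word_val G x \<in> palindromes G S"
proof -
  obtain w where w: "set (map snd w) \<subseteq> S" "rev w = w" "word_val G w = p" using pal_obtain[OF assms(2)] by blast
  have "word_val G (rev x @ w @ x) \<in> palindromes G S"
    by (rule pal_in) (use w assms in auto)
  moreover have "word_val G (rev x @ w @ x) = word_val G (rev x) \<otimes> p \<otimes> word_val G x"
  proof -
    have c: "set (map snd w) \<subseteq> carrier G" "set (map snd x) \<subseteq> carrier G" "set (map snd (rev x)) \<subseteq> carrier G" using w assms by auto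
    have "word_val G (rev x @ w @ x) = word_val G (rev x) \<otimes> word_val G w \<otimes> word_val G x"
      using c by (simp add: word_append m_assoc word_closed del: set_map)
    then show ?thesis using w by simp
  qed
  ultimately show ?thesis by simp
qed

lemma conj3: assumes "S \<subseteq> carrier G" "set (map snd x) \<subseteq> S"
  shows "word_val G (rev x) \<otimes> word_val G x \<in> palindromes G S"
  using conj1[OF assms(1) one_pal[OF assms(1)] assms(2)] assms word_closed[of "rev x"]
  by auto

lemma conj2: assumes "S \<subseteq> carrier G" "p \<in> palindromes G S" "set (map snd x) \<subseteq> S"
  shows "inv (word_val G x) \<otimes> p \<otimes> inv (word_val G (rev x)) \<in> palindromes G S"
proof -
  obtain w where w: "set (map snd w) \<subseteq> S" "rev w = w" "word_val G w = p" using pal_obtain[OF assms(2)] by blast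
  have "word_val G (map flipl (rev x) @ w @ map flipl x) \<in> palindromes G S"
    by (rule pal_in) (use w assms in \<open>auto simp: rev_map flipl_def\<close>)
  moreover have "word_val G (map flipl (rev x) @ w @ map flipl x) = inv (word_val G x) \<otimes> p \<otimes> inv (word_val G (rev x))"
  proof -
    have c: "set (map snd x) \<subseteq> carrier G" "set (map snd (rev x)) \<subseteq> carrier G"
      "set (map snd w) \<subseteq> carrier G" "set (map snd (map flipl x)) \<subseteq> carrier G"
      "set (map snd (map flipl (rev x))) \<subseteq> carrier G"
      using w assms by (auto simp: flipl_def)
    have i1: "word_val G (map flipl (rev x)) = inv (word_val G x)" using word_inv c by blast
    have i2: "word_val G (map flipl x) = inv (word_val G (rev x))" using word_inv[of "rev x"] c by simp
    have "word_val G (map flipl (rev x) @ w @ map flipl x) = word_val G (map flipl (rev x)) \<otimes> word_val G w \<otimes> word_val G (map flipl x)"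
      using c by (simp add: word_append m_assoc word_closed del: set_map)
    then show ?thesis using w i1 i2 by simp
  qed
  ultimately show ?thesis by simp
qed

lemma gen_word: assumes "S \<subseteq> carrier G" shows "g \<in> generate G S \<Longrightarrow> \<exists>x. set (map snd x) \<subseteq> S \<and> word_val G x = g"
proof (induction rule: generate.induct)
  case one then show ?case by (intro exI[of _ "[]"]) (simp add: word_val_def)
next
  case (incl h) then show ?case using assms by (intro exI[of _ "[(True,h)]"]) (auto simp: word_val_def letter_val_def)
next
  case (inv h) then show ?case using assms by (intro exI[of _ "[(False,h)]"]) (auto simp: word_val_def letter_val_def)
next
  case (eng h1 h2)
  then obtain x y where "set (map snd x) \<subseteq> S" "word_val G x = h1" "set (map snd y) \<subseteq> S" "word_val G y = h2" by blast
  then show ?case using assms by (intro exI[of _ "x @ y"]) (auto simp: word_append)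
qed


lemma lp_cons: "list_prod G (a # l) = a \<otimes> list_prod G l"
  by (simp add: list_prod_def)

lemma lp_nil[simp]: "list_prod G [] = \<one>"
  by (simp add: list_prod_def)

lemma lp_closed: "set l \<subseteq> carrier G \<Longrightarrow> list_prod G l \<in> carrier G"
  by (induction l) (auto simp: lp_cons)

lemma lp_append: "set l \<subseteq> carrier G \<Longrightarrow> set m \<subseteq> carrier G \<Longrightarrow>
   list_prod G (l @ m) = list_prod G l \<otimes> list_prod G m"
  by (induction l) (auto simp: lp_cons m_assoc lp_closed)

lemma lp_inv: "set l \<subseteq> carrier G \<Longrightarrow> inv (list_prod G l) = list_prod G (rev (map (\<lambda>y. inv y) l))"
proof (induction l)
  case (Cons a l)
  then have c: "a \<in> carrier G" "set l \<subseteq> carrier G" by auto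
  have "inv (list_prod G (a # l)) = inv (list_prod G l) \<otimes> inv a"
    using c by (simp add: lp_cons inv_mult_group lp_closed)
  also have "\<dots> = list_prod G (rev (map (\<lambda>y. inv y) l)) \<otimes> list_prod G [inv a]"
    using Cons.IH[OF c(2)] c by (simp add: lp_cons)
  also have "\<dots> = list_prod G (rev (map (\<lambda>y. inv y) (a # l)))"
  proof -
    have s1: "set (rev (map (\<lambda>y. inv y) l)) \<subseteq> carrier G" using c by auto
    have s2: "set [inv a] \<subseteq> carrier G" using c by auto
    show ?thesis using lp_append[OF s1 s2] by simp
  qed
  finally show ?case .
qed simp

lemma powAB: "a \<in> carrier G \<Longrightarrow> b \<in> carrier G \<Longrightarrow> (a \<otimes> b) [^] (k::nat) \<otimes> a = a \<otimes> (b \<otimes> a) [^] k"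
proof (induction k)
  case (Suc k)
  have "(a \<otimes> b) [^] Suc k \<otimes> a = ((a \<otimes> b) [^] k \<otimes> a) \<otimes> (b \<otimes> a)"
    using Suc.prems by (simp add: m_assoc)
  also have "\<dots> = a \<otimes> (b \<otimes> a) [^] k \<otimes> (b \<otimes> a)" using Suc by simp
  also have "\<dots> = a \<otimes> (b \<otimes> a) [^] Suc k" using Suc.prems by (simp add: m_assoc)
  finally show ?case .
qed simp

lemma AB: assumes "S \<subseteq> carrier G" "p1 \<in> palindromes G S" "p2 \<in> palindromes G S"
  shows "(p1 \<otimes> p2) [^] (k::nat) \<otimes> p1 \<in> palindromes G S \<and> (p2 \<otimes> p1) [^] k \<otimes> p2 \<in> palindromes G S"
proof (induction k)
  case 0
  have c: "p1 \<in> carrier G" "p2 \<in> carrier G" using assms pal_carrier by auto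
  then show ?case using assms by simp
next
  case (Suc k)
  have c: "p1 \<in> carrier G" "p2 \<in> carrier G" using assms pal_carrier by auto
  have e1: "(p1 \<otimes> p2) [^] Suc k \<otimes> p1 = p1 \<otimes> ((p2 \<otimes> p1) [^] k \<otimes> p2) \<otimes> p1"
  proof -
    have "(p1 \<otimes> p2) [^] Suc k \<otimes> p1 = ((p1 \<otimes> p2) [^] k \<otimes> p1) \<otimes> p2 \<otimes> p1"
      using c by (simp add: m_assoc)
    also have "\<dots> = p1 \<otimes> (p2 \<otimes> p1) [^] k \<otimes> p2 \<otimes> p1" using powAB c by simp
    finally show ?thesis using c by (simp add: m_assoc)
  qed
  have e2: "(p2 \<otimes> p1) [^] Suc k \<otimes> p2 = p2 \<otimes> ((p1 \<otimes> p2) [^] k \<otimes> p1) \<otimes> p2"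
  proof -
    have "(p2 \<otimes> p1) [^] Suc k \<otimes> p2 = ((p2 \<otimes> p1) [^] k \<otimes> p2) \<otimes> p1 \<otimes> p2"
      using c by (simp add: m_assoc)
    also have "\<dots> = p2 \<otimes> (p1 \<otimes> p2) [^] k \<otimes> p1 \<otimes> p2" using powAB c by simp
    finally show ?thesis using c by (simp add: m_assoc)
  qed
  show ?case unfolding e1 e2 using Suc sand_pal assms by blast
qed

lemma nat_part: assumes "S \<subseteq> carrier G" "p1 \<in> palindromes G S" "p2 \<in> palindromes G S"
  shows "\<exists>a \<in> palindromes G S. \<exists>b \<in> palindromes G S. (p1 \<otimes> p2) [^] (n::nat) = a \<otimes> b"
proof (cases n)
  case 0
  then show ?thesis using one_pal[OF assms(1)] by (intro bexI[of _ \<one>]) auto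
next
  case (Suc k)
  have c: "p1 \<in> carrier G" "p2 \<in> carrier G" using assms pal_carrier by auto
  have "(p1 \<otimes> p2) [^] n = ((p1 \<otimes> p2) [^] k \<otimes> p1) \<otimes> p2" using Suc c by (simp add: m_assoc)
  then show ?thesis using AB[OF assms, of k] assms by blast
qed

lemma conj_list: assumes "S \<subseteq> carrier G" "set (map snd x) \<subseteq> S"
  shows "set as \<subseteq> palindromes G S \<Longrightarrow> \<exists>qs. set qs \<subseteq> palindromes G S \<and>
    length qs = length as + (if even (length as) then 0 else 1) \<and>
    list_prod G qs = inv (word_val G x) \<otimes> list_prod G as \<otimes> word_val G x"
proof (induction as rule: induct_list012)
  case 1
  have "word_val G x \<in> carrier G" using assms word_closed by auto
  then show ?case by (intro exI[of _ "[]"]) simp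
next
  case (2 a)
  have u: "word_val G x \<in> carrier G" "word_val G (rev x) \<in> carrier G" using assms word_closed[of x] word_closed[of "rev x"] by auto
  have a: "a \<in> carrier G" "a \<in> palindromes G S" using 2 pal_carrier assms by auto
  let ?qs = "[inv (word_val G x) \<otimes> a \<otimes> inv (word_val G (rev x)), word_val G (rev x) \<otimes> word_val G x]"
  have "list_prod G ?qs = inv (word_val G x) \<otimes> list_prod G [a] \<otimes> word_val G x"
    using u a by (simp add: lp_cons m_assoc invcan1)
  moreover have "set ?qs \<subseteq> palindromes G S" using conj2[OF assms(1) a(2) assms(2)] conj3[OF assms] by auto
  ultimately show ?case by (intro exI[of _ ?qs]) auto
next
  case (3 a b zs)
  have u: "word_val G x \<in> carrier G" "word_val G (rev x) \<in> carrier G" using assms word_closed[of x] word_closed[of "rev x"] by auto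
  have ab0: "a \<in> palindromes G S" "b \<in> palindromes G S" using 3(3) by auto
  have ab: "a \<in> carrier G" "a \<in> palindromes G S" "b \<in> carrier G" "b \<in> palindromes G S"
    using ab0 pal_carrier[OF assms(1)] by auto
  have zs1: "set zs \<subseteq> palindromes G S" using 3(3) by simp
  have zs: "set zs \<subseteq> palindromes G S" "set zs \<subseteq> carrier G" using zs1 pal_carrier[OF assms(1)] by auto
  obtain qs where qs: "set qs \<subseteq> palindromes G S" "length qs = length zs + (if even (length zs) then 0 else 1)"
    "list_prod G qs = inv (word_val G x) \<otimes> list_prod G zs \<otimes> word_val G x" using 3(1) zs by blast
  let ?qs = "(inv (word_val G x) \<otimes> a \<otimes> inv (word_val G (rev x))) # (word_val G (rev x) \<otimes> b \<otimes> word_val G x) # qs"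
  have lz: "list_prod G zs \<in> carrier G" using zs lp_closed by auto
  have "list_prod G ?qs = inv (word_val G x) \<otimes> list_prod G (a # b # zs) \<otimes> word_val G x"
    using u ab qs(3) lz by (simp add: lp_cons m_assoc invcan1 invcan2)
  moreover have "set ?qs \<subseteq> palindromes G S"
    using conj2[OF assms(1) ab(2) assms(2)] conj1[OF assms(1) ab(4) assms(2)] qs(1) by auto
  moreover have "length ?qs = length (a # b # zs) + (if even (length (a # b # zs)) then 0 else 1)"
    using qs(2) by simp
  ultimately show ?case by blast
qed

lemma part1: assumes "S \<subseteq> carrier G" "p1 \<in> palindromes G S" "p2 \<in> palindromes G S"
  shows "\<forall>m::int. \<exists>a \<in> palindromes G S. \<exists>b \<in> palindromes G S. (p1 \<otimes> p2) [^] m = a \<otimes> b"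
proof -
  have c: "p1 \<in> carrier G" "p2 \<in> carrier G" using assms pal_carrier by auto
  show "\<forall>m::int. \<exists>a \<in> palindromes G S. \<exists>b \<in> palindromes G S. (p1 \<otimes> p2) [^] m = a \<otimes> b"
  proof
    fix m :: int
    show "\<exists>a \<in> palindromes G S. \<exists>b \<in> palindromes G S. (p1 \<otimes> p2) [^] m = a \<otimes> b"
    proof (cases "m \<ge> 0")
      case True
      define n where "n = nat m"
      have "m = int n" using True unfolding n_def by simp
      then show ?thesis using nat_part[OF assms(1) assms(2,3), of n] by (simp add: int_pow_int)
    next
      case False
      define n where "n = nat (- m)"
      have m: "m = - int n" using False unfolding n_def by simp
      have "(p1 \<otimes> p2) [^] m = inv ((p1 \<otimes> p2) [^] n)" using m c by (simp add: int_pow_neg_int)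
      also have "\<dots> = (inv (p1 \<otimes> p2)) [^] n" using c by (simp add: nat_pow_inv)
      also have "\<dots> = (inv p2 \<otimes> inv p1) [^] n" using c by (simp add: inv_mult_group)
      finally show ?thesis
        using nat_part[OF assms(1) inv_pal[OF assms(1) assms(3)] inv_pal[OF assms(1) assms(2)], of n] by simp
    qed
  qed
qed

lemma part2: assumes "S \<subseteq> carrier G" "generate G S = carrier G" "set ps \<subseteq> palindromes G S" "u \<in> carrier G"
  shows "pal_length G S (commutator G u (list_prod G ps))
           \<le> 2 * length ps + (if even (length ps) then 0 else 1)"
proof -
  obtain x where x: "set (map snd x) \<subseteq> S" "word_val G x = u"
    using gen_word[OF assms(1)] assms(2,4) by blast
  have psc: "set ps \<subseteq> carrier G" using assms(1,3) pal_carrier by auto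
  have ips: "set (rev (map (\<lambda>y. inv y) ps)) \<subseteq> palindromes G S" using assms(1,3) inv_pal by auto
  obtain qs where qs: "set qs \<subseteq> palindromes G S"
    "length qs = length ps + (if even (length ps) then 0 else 1)"
    "list_prod G qs = inv u \<otimes> list_prod G (rev (map (\<lambda>y. inv y) ps)) \<otimes> u"
    using conj_list[OF assms(1) x(1) ips] x(2) by auto
  have qsc: "set qs \<subseteq> carrier G" using qs(1) assms(1) pal_carrier by auto
  have "list_prod G (qs @ ps) = commutator G u (list_prod G ps)"
    using qs(3) psc qsc assms(4) by (simp add: lp_append commutator_def lp_inv lp_closed)
  moreover have "set (qs @ ps) \<subseteq> palindromes G S" using qs(1) assms(3) by auto
  ultimately have "pal_length G S (commutator G u (list_prod G ps)) \<le> length (qs @ ps)"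
    unfolding pal_length_def by (intro Least_le) blast
  then show ?thesis using qs(2) by simp
qed

end

theorem lemma2p5:
  fixes G :: "('g, 'b) monoid_scheme" and S :: "'g set"
    and ps :: "'g list" and u p1 p2 :: 'g
  assumes "group G"
    and "S \<subseteq> carrier G"
    and "generate G S = carrier G"
    and "p1 \<in> palindromes G S" and "p2 \<in> palindromes G S"
    and "set ps \<subseteq> palindromes G S"
    and "u \<in> carrier G"
  shows "(\<forall>m::int. \<exists>a \<in> palindromes G S. \<exists>b \<in> palindromes G S.
            (p1 \<otimes>\<^bsub>G\<^esub> p2) [^]\<^bsub>G\<^esub> m = a \<otimes>\<^bsub>G\<^esub> b)
       \<and> pal_length G S (commutator G u (list_prod G ps))
           \<le> 2 * length ps + (if even (length ps) then 0 else 1)"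
proof -
  have "\<forall>m::int. \<exists>a \<in> palindromes G S. \<exists>b \<in> palindromes G S.
            (p1 \<otimes>\<^bsub>G\<^esub> p2) [^]\<^bsub>G\<^esub> m = a \<otimes>\<^bsub>G\<^esub> b"
    by (rule group.part1[OF assms(1,2,4,5)])
  moreover have "pal_length G S (commutator G u (list_prod G ps))
           \<le> 2 * length ps + (if even (length ps) then 0 else 1)"
    by (rule group.part2[OF assms(1,2,3,6,7)])
  ultimately show ?thesis by blast
qed

end
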